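(* Let $f:\mathbb{R}^d\times\mathbb{R}^d\to\mathbb{R}^d$ and $g:\mathbb{R}^d\times\mathbb{R}^d\to\mathbb{R}^{d\times m}$ satisfy: (i) for each $R>0$ there is $L_R>0$ such that $|f(x,y)-f(\bar x,\bar y)|\vee|g(x,y)-g(\bar x,\bar y)|\le L_R(|x-\bar x|+|y-\bar y|)$ whenever $|x|\vee|y|\vee|\bar x|\vee|\bar y|\le R$; (ii) there are constants $a_{ii}\in\mathbb{R}$, $a_{ij}\ge0$ for $i\ne j$, $b_{ij}\ge0$ such that for every $i\in\{1,\dots,d\}$ and all $x,y\in\mathbb{R}^d$: $2x_if_i(x,y)+\sum_{l=1}^m g_{il}(x,y)^2\le\sum_{j=1}^d a_{ij}x_j^2+\sum_{j=1}^d b_{ij}y_j^2$. Then for any fixed $\Delta\in(0,\Delta^* )$ there exist constants $a_{ii}\in\mathbb{R}$, $a_{ij}\ge0$ ($i\ne j$), $b_{ij}\ge0$ such that $$2x_if_{\Delta,i}(x,y)+\sum_{l=1}^m g_{\Delta,il}(x,y)^2\le\sum_{j=1}^d a_{ij}x_j^2+\sum_{j=1}^d b_{ij}y_j^2,\qquad i\in\{1,\dots,d\},$$ for all $x,y\in\mathbb{R}^d$, where $f_\Delta, g_\Delta$ are the modified truncated functions defined in the context.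
   Context: Let $\Delta^*>0$ and let $h:(0,\Delta^*]\to(0,\infty)$ be strictly decreasing with $\lim_{\Delta\to0}h(\Delta)=\infty$ and $\lim_{\Delta\to0}L_{h(\Delta)}^2\Delta=0$, where $L_R$ is the local Lipschitz constant above. For $\Delta\in(0,\Delta^* )$ the modified truncated function is $f_\Delta(x,y)=f(x,y)$ if $|x|\vee|y|\le h(\Delta)$ and $f_\Delta(x,y)=\frac{|x|\vee|y|}{h(\Delta)}f\big(\frac{h(\Delta)}{|x|\vee|y|}x,\frac{h(\Delta)}{|x|\vee|y|}y\big)$ if $|x|\vee|y|>h(\Delta)$; $g_\Delta$ is defined from $g$ in the same way. $f_{\Delta,i}$ and $g_{\Delta,il}$ denote components. *)

theory Defs
  imports "HOL-Analysis.Analysis"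
begin

definition trunc_fun ::
  "(real \<Rightarrow> real) \<Rightarrow> real \<Rightarrow> ('a::real_normed_vector \<Rightarrow> 'a \<Rightarrow> 'b::real_normed_vector)
     \<Rightarrow> 'a \<Rightarrow> 'a \<Rightarrow> 'b" where
  "trunc_fun h \<Delta> F x y =
     (let r = max (norm x) (norm y) in
      if r \<le> h \<Delta> then F x y
      else (r / h \<Delta>) *\<^sub>R F ((h \<Delta> / r) *\<^sub>R x) ((h \<Delta> / r) *\<^sub>R y))"

end

theory Submission
  imports Defs
begin

theorem lemma4p1:
  fixes f :: "real^'d \<Rightarrow> real^'d \<Rightarrow> real^'d"
    and g :: "real^'d \<Rightarrow> real^'d \<Rightarrow> real^'m^'d"
    and L :: "real \<Rightarrow> real"
    and h :: "real \<Rightarrow> real"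
    and \<Delta>star \<Delta> :: real
  assumes L_pos: "\<forall>R>0. L R > 0"
    and loc_lip: "\<forall>R>0. \<forall>x y xb yb.
        max (max (norm x) (norm y)) (max (norm xb) (norm yb)) \<le> R \<longrightarrow>
        max (norm (f x y - f xb yb)) (norm (g x y - g xb yb))
          \<le> L R * (norm (x - xb) + norm (y - yb))"
    and khasminskii: "\<exists>a b :: 'd \<Rightarrow> 'd \<Rightarrow> real.
        (\<forall>i j. i \<noteq> j \<longrightarrow> a i j \<ge> 0) \<and> (\<forall>i j. b i j \<ge> 0) \<and>
        (\<forall>i x y. 2 * (x $ i) * (f x y $ i) + (\<Sum>l\<in>UNIV. (g x y $ i $ l)\<^sup>2)
            \<le> (\<Sum>j\<in>UNIV. a i j * (x $ j)\<^sup>2) + (\<Sum>j\<in>UNIV. b i j * (y $ j)\<^sup>2))"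
    and Dstar_pos: "\<Delta>star > 0"
    and h_pos: "\<forall>t. 0 < t \<and> t \<le> \<Delta>star \<longrightarrow> h t > 0"
    and h_decr: "\<forall>s t. 0 < s \<and> s < t \<and> t \<le> \<Delta>star \<longrightarrow> h t < h s"
    and h_lim: "filterlim h at_top (at_right 0)"
    and hL_lim: "((\<lambda>t. (L (h t))\<^sup>2 * t) \<longlongrightarrow> 0) (at_right 0)"
    and Delta: "0 < \<Delta>" "\<Delta> < \<Delta>star"
  shows "\<exists>a b :: 'd \<Rightarrow> 'd \<Rightarrow> real.
        (\<forall>i j. i \<noteq> j \<longrightarrow> a i j \<ge> 0) \<and> (\<forall>i j. b i j \<ge> 0) \<and>
        (\<forall>i x y. 2 * (x $ i) * (trunc_fun h \<Delta> f x y $ i)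
              + (\<Sum>l\<in>UNIV. (trunc_fun h \<Delta> g x y $ i $ l)\<^sup>2)
            \<le> (\<Sum>j\<in>UNIV. a i j * (x $ j)\<^sup>2) + (\<Sum>j\<in>UNIV. b i j * (y $ j)\<^sup>2))"
proof -
  obtain a b :: "'d \<Rightarrow> 'd \<Rightarrow> real" where ha: "\<forall>i j. i \<noteq> j \<longrightarrow> a i j \<ge> 0"
    and hb: "\<forall>i j. b i j \<ge> 0"
    and hk: "\<And>i x y. 2 * (x $ i) * (f x y $ i) + (\<Sum>l\<in>UNIV. (g x y $ i $ l)\<^sup>2)
            \<le> (\<Sum>j\<in>UNIV. a i j * (x $ j)\<^sup>2) + (\<Sum>j\<in>UNIV. b i j * (y $ j)\<^sup>2)"
    using khasminskii by blast
  have hD: "h \<Delta> > 0" using h_pos Delta by auto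
  have main: "2 * (x $ i) * (trunc_fun h \<Delta> f x y $ i)
              + (\<Sum>l\<in>UNIV. (trunc_fun h \<Delta> g x y $ i $ l)\<^sup>2)
            \<le> (\<Sum>j\<in>UNIV. a i j * (x $ j)\<^sup>2) + (\<Sum>j\<in>UNIV. b i j * (y $ j)\<^sup>2)" for i x y
  proof (cases "max (norm x) (norm y) \<le> h \<Delta>")
    case True
    then show ?thesis using hk[of x i y] by (simp add: trunc_fun_def Let_def)
  next
    case False
    define r where "r = max (norm x) (norm y)"
    define k where "k = r / h \<Delta>"
    define c where "c = h \<Delta> / r"
    have rpos: "r > 0" using False hD unfolding r_def by linarith
    have kc: "k * c = 1" unfolding k_def c_def using rpos hD by simp
    define x' where "x' = c *\<^sub>R x"
    define y' where "y' = c *\<^sub>R y"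
    have xx: "x $ j = k * (x' $ j)" for j unfolding x'_def using kc
      by (simp add: mult.assoc[symmetric])
    have yy: "y $ j = k * (y' $ j)" for j unfolding y'_def using kc
      by (simp add: mult.assoc[symmetric])
    have tf: "trunc_fun h \<Delta> f x y $ i = k * (f x' y' $ i)"
      using False unfolding trunc_fun_def Let_def x'_def y'_def k_def c_def r_def[symmetric]
      by (simp only: if_False) simp
    have tg: "trunc_fun h \<Delta> g x y $ i $ l = k * (g x' y' $ i $ l)" for l
      using False unfolding trunc_fun_def Let_def x'_def y'_def k_def c_def r_def[symmetric]
      by (simp only: if_False) simp
    have "2 * (x $ i) * (trunc_fun h \<Delta> f x y $ i)
              + (\<Sum>l\<in>UNIV. (trunc_fun h \<Delta> g x y $ i $ l)\<^sup>2)
         = k\<^sup>2 * (2 * (x' $ i) * (f x' y' $ i) + (\<Sum>l\<in>UNIV. (g x' y' $ i $ l)\<^sup>2))"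
      by (simp add: tf tg xx power_mult_distrib sum_distrib_left algebra_simps power2_eq_square)
    also have "\<dots> \<le> k\<^sup>2 * ((\<Sum>j\<in>UNIV. a i j * (x' $ j)\<^sup>2) + (\<Sum>j\<in>UNIV. b i j * (y' $ j)\<^sup>2))"
      by (rule mult_left_mono[OF hk]) simp
    also have "\<dots> = (\<Sum>j\<in>UNIV. a i j * (x $ j)\<^sup>2) + (\<Sum>j\<in>UNIV. b i j * (y $ j)\<^sup>2)"
      by (simp add: xx yy power_mult_distrib sum_distrib_left algebra_simps)
    finally show ?thesis .
  qed
  show ?thesis using ha hb main by blast
qed

end
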